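(* Let $r, s, m, n$ be positive integers, let $f: V(H_{n,m}) \rightarrow \{-r,s\}$ be a function, and let $q = \frac{1}{n} f(V(H_{n,m}))$. Then $H_{n,m}$ can be decomposed into $n$ vertex-disjoint directed $m$-paths $P_1, P_2, \ldots, P_n$ such that \[\lambda(q,r,s,m) \le f(V(P_i)) \le \Lambda(q,r,s,m)\] for all $1 \le i \le n$.
   Context: For a set $Y$ of vertices, $f(Y)=\sum_{y\in Y}f(y)$. For positive integers $n,m$, $H_{n,m}$ is the directed graph whose vertex set is the disjoint union of $V_1,\dots,V_m$ with $|V_i|=n$, and whose arc set is $\bigcup_{i=1}^{m-1}\{(v,w): v\in V_i, w\in V_{i+1}\}$. A directed $m$-path is a directed path with $m$ vertices. $L(r,s,m)=\{-rx+sy : x,y\in\mathbb{Z}, x,y\ge 0, x+y=m\}$, and for real $q\in[-rm,sm]$, $\lambda(q,r,s,m)=\max\{p\in L(r,s,m): p\le q\}$ and $\Lambda(q,r,s,m)=\min\{p\in L(r,s,m): p\ge q\}$. *)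

theory Defs
  imports Complex_Main
begin

text \<open>The digraph H(n,m). A vertex is a pair (i, a): layer i (0-based, i < m)
  and position a within the layer (a < n). So V_{i+1} of the paper is layer i.\<close>

definition H_verts :: "nat \<Rightarrow> nat \<Rightarrow> (nat \<times> nat) set" where
  "H_verts n m = {0..<m} \<times> {0..<n}"

definition H_arc :: "nat \<Rightarrow> nat \<Rightarrow> nat \<times> nat \<Rightarrow> nat \<times> nat \<Rightarrow> bool" where
  "H_arc n m v w \<longleftrightarrow> v \<in> H_verts n m \<and> w \<in> H_verts n m \<and> fst w = Suc (fst v)"

definition is_dipath :: "'v set \<Rightarrow> ('v \<Rightarrow> 'v \<Rightarrow> bool) \<Rightarrow> nat \<Rightarrow> 'v list \<Rightarrow> bool" where
  "is_dipath V A k P \<longleftrightarrow> length P = k \<and> distinct P \<and> set P \<subseteq> V \<and>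
     (\<forall>j. Suc j < length P \<longrightarrow> A (P ! j) (P ! Suc j))"

definition Lset :: "nat \<Rightarrow> nat \<Rightarrow> nat \<Rightarrow> real set" where
  "Lset r s m = {- real r * real x + real s * real y | x y. x + y = m}"

definition lam :: "real \<Rightarrow> nat \<Rightarrow> nat \<Rightarrow> nat \<Rightarrow> real" where
  "lam q r s m = Max {p \<in> Lset r s m. p \<le> q}"

definition Lam :: "real \<Rightarrow> nat \<Rightarrow> nat \<Rightarrow> nat \<Rightarrow> real" where
  "Lam q r s m = Min {p \<in> Lset r s m. q \<le> p}"

end

theory Submission
  imports Defs
begin

definition cc :: "nat \<Rightarrow> nat \<Rightarrow> nat \<Rightarrow> nat" where
  "cc n t i = t div n + (if i < t mod n then 1 else 0)"

definition rh :: "nat \<Rightarrow> nat \<Rightarrow> nat \<Rightarrow> nat" where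
  "rh n t i = (if t mod n \<le> i then i - t mod n else i + n - t mod n)"

lemma cc_zero: "cc n 0 i = 0"
  by (simp add: cc_def)

lemma rh_lt: "i < n \<Longrightarrow> rh n t i < n"
  unfolding rh_def using mod_less_divisor[of n t] by auto

lemma rh_inj: "i < n \<Longrightarrow> j < n \<Longrightarrow> rh n t i = rh n t j \<Longrightarrow> i = j"
proof -
  assume as: "i < n" "j < n" "rh n t i = rh n t j"
  have "t mod n < n" using as by simp
  then show ?thesis using as unfolding rh_def by (cases "t mod n \<le> i"; cases "t mod n \<le> j"; simp; linarith)
qed

lemma cc_step:
  fixes T k i n :: nat
  assumes "k \<le> n" "i < n"
  shows "cc n (T + k) i = cc n T i + (if rh n T i < k then 1 else 0)"
proof -
  define a where "a = T mod n"
  define q where "q = T div n"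
  have n0: "n > 0" using assms by simp
  have a: "a < n" unfolding a_def using n0 by simp
  have T: "T = q * n + a" unfolding a_def q_def by simp
  show ?thesis
  proof (cases "a + k < n")
    case True
    have e: "T + k = (a + k) + q * n" unfolding T by simp
    have "(T + k) div n = q" unfolding e using True n0 by simp
    moreover have "(T + k) mod n = a + k" unfolding e using True n0 by simp
    ultimately show ?thesis using True a assms
      unfolding cc_def rh_def a_def[symmetric] q_def[symmetric] by auto
  next
    case False
    have e: "T + k = (a + k - n) + (q + 1) * n" unfolding T using False by simp
    have l: "a + k - n < n" using a assms by simp
    have "(T + k) div n = (q + 1) + (a + k - n) div n" unfolding e by (rule div_mult_self1) (use n0 in simp)
    then have "(T + k) div n = q + 1" using l by simp
    moreover have "(T + k) mod n = (a + k - n) mod n" unfolding e by (rule mod_mult_self1)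
    then have "(T + k) mod n = a + k - n" using l by simp
    ultimately show ?thesis using False a assms
      unfolding cc_def rh_def a_def[symmetric] q_def[symmetric] by auto
  qed
qed


lemma Lset_eq: "Lset r s m = (\<lambda>y. real (r + s) * real y - real r * real m) ` {0..m}"
proof -
  have "Lset r s m = {- real r * real x + real s * real y | x y. x + y = m}" by (simp add: Lset_def)
  also have "\<dots> = (\<lambda>y. real (r + s) * real y - real r * real m) ` {0..m}"
  proof (rule set_eqI, rule iffI)
    fix p assume "p \<in> {- real r * real x + real s * real y | x y. x + y = m}"
    then obtain x y where "x + y = m" "p = - real r * real x + real s * real y" by blast
    then show "p \<in> (\<lambda>y. real (r + s) * real y - real r * real m) ` {0..m}"
      by (intro image_eqI[of _ _ y]) (auto simp: algebra_simps)
  next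
    fix p assume "p \<in> (\<lambda>y. real (r + s) * real y - real r * real m) ` {0..m}"
    then obtain y where "y \<le> m" "p = real (r + s) * real y - real r * real m" by auto
    then show "p \<in> {- real r * real x + real s * real y | x y. x + y = m}"
      by (intro CollectI exI[of _ "m - y"] exI[of _ y]) (auto simp: algebra_simps of_nat_diff)
  qed
  finally show ?thesis .
qed

lemma lam_Lam_bound:
  fixes r s m n K i :: nat
  assumes "r > 0" "s > 0" "n > 0" "K \<le> n * m"
    and q: "q = (real (r + s) * real K - real r * real n * real m) / real n"
  shows "lam q r s m \<le> real (r + s) * real (cc n K i) - real r * real m"
    and "real (r + s) * real (cc n K i) - real r * real m \<le> Lam q r s m"
proof -
  define w where "w y = real (r + s) * real y - real r * real m" for y :: nat
  have q': "q = real (r + s) * (real K / real n) - real r * real m"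
    using assms by (simp add: q field_simps)
  have rs: "real (r + s) > 0" using assms by simp
  have L: "Lset r s m = w ` {0..m}" unfolding w_def by (rule Lset_eq)
  have fin: "finite (Lset r s m)" unfolding L by simp
  have c1: "K div n \<le> cc n K i" by (simp add: cc_def)
  {
    fix y :: nat assume "w y \<le> q"
    then have "real (r + s) * real y \<le> real (r + s) * (real K / real n)" unfolding w_def q' by simp
    then have "real y \<le> real K / real n" by (rule mult_left_le_imp_le[OF _ rs])
    then have "real y * real n \<le> real K" using assms by (simp add: field_simps)
    then have "y * n \<le> K" by (metis of_nat_le_iff of_nat_mult)
    then have "y \<le> K div n" using assms by (simp add: less_eq_div_iff_mult_less_eq)
  } note low = this
  {
    fix y :: nat assume "q \<le> w y"
    then have "real (r + s) * (real K / real n) \<le> real (r + s) * real y" unfolding w_def q' by simp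
    then have "real K / real n \<le> real y" by (rule mult_left_le_imp_le[OF _ rs])
    then have "real K \<le> real y * real n" using assms by (simp add: field_simps)
    then have Ky: "K \<le> y * n" by (metis of_nat_le_iff of_nat_mult)
    have "cc n K i \<le> y"
    proof (cases "i < K mod n")
      case True
      then have "K div n * n < K" using div_mult_mod_eq[of K n] by linarith
      then have "K div n * n < y * n" using Ky by linarith
      then have "K div n < y" by simp
      then show ?thesis using True by (simp add: cc_def)
    next
      case False
      have "K div n * n \<le> y * n" using Ky div_mult_mod_eq[of K n] by linarith
      then have "K div n \<le> y" using assms by simp
      then show ?thesis using False by (simp add: cc_def)
    qed
  } note high = this
  have ne1: "w 0 \<in> {p \<in> Lset r s m. p \<le> q}"
    unfolding L q' w_def using assms by auto
  have "Max {p \<in> Lset r s m. p \<le> q} \<le> w (cc n K i)"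
  proof (subst Max_le_iff)
    show "finite {p \<in> Lset r s m. p \<le> q}" using fin by simp
    show "{p \<in> Lset r s m. p \<le> q} \<noteq> {}" using ne1 by blast
    show "\<forall>a\<in>{p \<in> Lset r s m. p \<le> q}. a \<le> w (cc n K i)"
    proof
      fix a assume "a \<in> {p \<in> Lset r s m. p \<le> q}"
      then obtain y where y: "a = w y" "w y \<le> q" unfolding L by auto
      have "y \<le> cc n K i" using low[OF y(2)] c1 by linarith
      then show "a \<le> w (cc n K i)" unfolding y(1) w_def by (simp add: mult_left_mono)
    qed
  qed
  then show "lam q r s m \<le> real (r + s) * real (cc n K i) - real r * real m"
    unfolding lam_def w_def .
  have "real K \<le> real n * real m" using assms(4) by (metis of_nat_le_iff of_nat_mult)
  then have "real K / real n \<le> real m" using assms(3) by (simp add: field_simps)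
  then have "real (r + s) * (real K / real n) \<le> real (r + s) * real m"
    using rs by (intro mult_left_mono) auto
  then have ne2: "w m \<in> {p \<in> Lset r s m. q \<le> p}"
    unfolding L q' w_def by auto
  have "w (cc n K i) \<le> Min {p \<in> Lset r s m. q \<le> p}"
  proof (subst Min_ge_iff)
    show "finite {p \<in> Lset r s m. q \<le> p}" using fin by simp
    show "{p \<in> Lset r s m. q \<le> p} \<noteq> {}" using ne2 by blast
    show "\<forall>a\<in>{p \<in> Lset r s m. q \<le> p}. w (cc n K i) \<le> a"
    proof
      fix a assume "a \<in> {p \<in> Lset r s m. q \<le> p}"
      then obtain y where y: "a = w y" "q \<le> w y" unfolding L by auto
      have "cc n K i \<le> y" using high[OF y(2)] .
      then show "w (cc n K i) \<le> a" unfolding y(1) w_def by (simp add: mult_left_mono)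
    qed
  qed
  then show "real (r + s) * real (cc n K i) - real r * real m \<le> Lam q r s m"
    unfolding Lam_def w_def .
qed


theorem theorem4p3:
  fixes r s m n :: nat and f :: "nat \<times> nat \<Rightarrow> int"
  assumes "r > 0" "s > 0" "m > 0" "n > 0"
    and "\<forall>v \<in> H_verts n m. f v \<in> {- int r, int s}"
  defines "q \<equiv> (1 / real n) * real_of_int (\<Sum>v \<in> H_verts n m. f v)"
  shows "\<exists>P :: nat \<Rightarrow> (nat \<times> nat) list.
     (\<forall>i<n. is_dipath (H_verts n m) (H_arc n m) m (P i)) \<and>
     (\<forall>i<n. \<forall>j<n. i \<noteq> j \<longrightarrow> set (P i) \<inter> set (P j) = {}) \<and>
     (\<Union>i<n. set (P i)) = H_verts n m \<and>
     (\<forall>i<n. lam q r s m \<le> real_of_int (\<Sum>v \<in> set (P i). f v) \<and>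
            real_of_int (\<Sum>v \<in> set (P i). f v) \<le> Lam q r s m)"
proof -
  define S where "S l = {a \<in> {0..<n}. f (l, a) = int s}" for l
  define C where "C l = {0..<n} - S l" for l
  define k where "k l = card (S l)" for l
  define Lst where "Lst l = sorted_list_of_set (S l) @ sorted_list_of_set (C l)" for l
  define T where "T L = (\<Sum>l<L. k l)" for L
  define P where "P i = map (\<lambda>l. (l, Lst l ! rh n (T l) i)) [0..<m]" for i
  have rs: "- int r \<noteq> int s" using assms by simp
  have Ssub: "S l \<subseteq> {0..<n}" for l unfolding S_def by auto
  have finS: "finite (S l)" for l using Ssub finite_subset by blast
  have finC: "finite (C l)" for l unfolding C_def by simp
  have kn: "k l \<le> n" for l unfolding k_def using card_mono[OF _ Ssub] by simp
  have cardC: "card (C l) = n - k l" for l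
    unfolding C_def k_def using card_Diff_subset[OF finS Ssub] by simp
  have lenL: "length (Lst l) = n" for l
    unfolding Lst_def using cardC[of l] kn[of l] by (simp add: k_def)
  have setL: "set (Lst l) = {0..<n}" for l
    unfolding Lst_def using finS finC Ssub by (auto simp: C_def)
  have distL: "distinct (Lst l)" for l
    unfolding Lst_def using finS finC by (auto simp: C_def)
  have Lltn: "j < n \<Longrightarrow> Lst l ! j < n" for l j
    using setL[of l] lenL[of l] nth_mem[of j "Lst l"] by auto
  have fL: "f (l, Lst l ! j) = (if j < k l then int s else - int r)" if "l < m" "j < n" for l j
  proof (cases "j < k l")
    case True
    then have "Lst l ! j = sorted_list_of_set (S l) ! j"
      unfolding Lst_def by (simp add: nth_append k_def finS)
    moreover have "sorted_list_of_set (S l) ! j \<in> S l"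
      using True finS[of l] by (metis k_def length_sorted_list_of_set nth_mem set_sorted_list_of_set)
    ultimately show ?thesis using True unfolding S_def by simp
  next
    case False
    then have "Lst l ! j = sorted_list_of_set (C l) ! (j - k l)"
      unfolding Lst_def by (simp add: nth_append k_def finS)
    moreover have "j - k l < card (C l)" using False that cardC[of l] by simp
    then have "sorted_list_of_set (C l) ! (j - k l) \<in> C l"
      using finC[of l] by (metis length_sorted_list_of_set nth_mem set_sorted_list_of_set)
    ultimately have "Lst l ! j \<notin> S l" "Lst l ! j < n" unfolding C_def by auto
    moreover have "f (l, Lst l ! j) \<in> {- int r, int s}"
      using assms(5) that \<open>Lst l ! j < n\<close> by (auto simp: H_verts_def)
    ultimately show ?thesis using False unfolding S_def by auto
  qed
  have Pnth: "j < m \<Longrightarrow> P i ! j = (j, Lst j ! rh n (T j) i)" for i j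
    unfolding P_def by simp
  have setP: "set (P i) = (\<lambda>l. (l, Lst l ! rh n (T l) i)) ` {0..<m}" for i
    unfolding P_def by simp
  have path: "is_dipath (H_verts n m) (H_arc n m) m (P i)" if "i < n" for i
  proof -
    have sub: "set (P i) \<subseteq> H_verts n m"
      unfolding setP H_verts_def using Lltn rh_lt[OF that] by auto
    have "distinct (P i)" unfolding P_def
      by (simp add: distinct_map inj_on_def)
    moreover have "H_arc n m (P i ! j) (P i ! Suc j)" if "Suc j < length (P i)" for j
    proof -
      have "P i ! j \<in> set (P i)" "P i ! Suc j \<in> set (P i)" using that by auto
      then show ?thesis using that sub unfolding H_arc_def by (auto simp: Pnth P_def)
    qed
    ultimately show ?thesis using sub unfolding is_dipath_def P_def by simp
  qed
  have disj: "set (P i) \<inter> set (P j) = {}" if "i < n" "j < n" "i \<noteq> j" for i j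
  proof (rule ccontr)
    assume "set (P i) \<inter> set (P j) \<noteq> {}"
    then obtain l where l: "l < m" "Lst l ! rh n (T l) i = Lst l ! rh n (T l) j"
      unfolding setP by auto
    then have "rh n (T l) i = rh n (T l) j"
      using nth_eq_iff_index_eq[OF distL, of "rh n (T l) i" l "rh n (T l) j"] lenL rh_lt that by simp
    then show False using rh_inj that by blast
  qed
  have cover: "(\<Union>i<n. set (P i)) = H_verts n m"
  proof
    show "(\<Union>i<n. set (P i)) \<subseteq> H_verts n m" using path unfolding is_dipath_def by blast
    show "H_verts n m \<subseteq> (\<Union>i<n. set (P i))"
    proof
      fix v assume "v \<in> H_verts n m"
      then obtain l a where v: "v = (l, a)" "l < m" "a < n" unfolding H_verts_def by auto
      then obtain j where j: "j < n" "Lst l ! j = a"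
        using setL[of l] lenL[of l] by (metis atLeastLessThan_iff in_set_conv_nth zero_le)
      have "rh n (T l) ` {0..<n} = {0..<n}"
        by (rule endo_inj_surj) (auto simp: inj_on_def rh_lt intro: rh_inj)
      then obtain i where i: "i < n" "rh n (T l) i = j" using j by (metis atLeastLessThan_iff imageE zero_le)
      then have "v \<in> set (P i)" unfolding setP v using v j by auto
      then show "v \<in> (\<Union>i<n. set (P i))" using i by auto
    qed
  qed
  have sumP: "(\<Sum>v \<in> set (P i). f v) = (\<Sum>l<m. if rh n (T l) i < k l then int s else - int r)"
    if "i < n" for i
  proof -
    have "(\<Sum>v \<in> set (P i). f v) = (\<Sum>l\<in>{0..<m}. f (l, Lst l ! rh n (T l) i))"
      unfolding setP by (subst sum.reindex) (auto simp: inj_on_def)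
    also have "\<dots> = (\<Sum>l<m. if rh n (T l) i < k l then int s else - int r)"
      using fL rh_lt[OF that] by (auto simp: atLeast0LessThan intro: sum.cong)
    finally show ?thesis .
  qed
  have ind: "(\<Sum>l<L. if rh n (T l) i < k l then int s else - int r)
      = int (r + s) * int (cc n (T L) i) - int r * int L" if "i < n" for i L
  proof (induction L)
    case 0
    then show ?case by (simp add: cc_zero T_def)
  next
    case (Suc L)
    have TS: "T (Suc L) = T L + k L" unfolding T_def by simp
    show ?case using Suc cc_step[OF kn[of L] that, of "T L"] unfolding TS
      by (auto simp: algebra_simps)
  qed
  have total: "(\<Sum>v \<in> H_verts n m. f v) = int (r + s) * int (T m) - int r * int n * int m"
  proof -
    have "(\<Sum>v \<in> H_verts n m. f v) = (\<Sum>l<m. \<Sum>a\<in>{0..<n}. f (l, a))"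
      unfolding H_verts_def by (simp add: sum.cartesian_product atLeast0LessThan)
    also have "\<dots> = (\<Sum>l<m. int s * int (k l) - int r * (int n - int (k l)))"
    proof (rule sum.cong[OF refl])
      fix l assume l: "l \<in> {..<m}"
      have "(\<Sum>a\<in>{0..<n}. f (l, a)) = (\<Sum>a\<in>{0..<n}. if a \<in> S l then int s else - int r)"
      proof (rule sum.cong[OF refl])
        fix a assume "a \<in> {0..<n}"
        moreover have "f (l, a) \<in> {- int r, int s}" using assms(5) l \<open>a \<in> {0..<n}\<close>
          by (auto simp: H_verts_def)
        ultimately show "f (l, a) = (if a \<in> S l then int s else - int r)"
          unfolding S_def by auto
      qed
      also have "\<dots> = (\<Sum>a\<in>S l. int s) + (\<Sum>a\<in>C l. - int r)"
        by (subst sum.If_cases) (auto simp: C_def Diff_eq Int_absorb1[OF Ssub] Int_absorb2[OF Ssub])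
      also have "\<dots> = int s * int (k l) - int r * (int n - int (k l))"
        using cardC[of l] kn[of l] by (simp add: k_def of_nat_diff algebra_simps)
      finally show "(\<Sum>a\<in>{0..<n}. f (l, a)) = int s * int (k l) - int r * (int n - int (k l))" .
    qed
    also have "\<dots> = int (r + s) * (\<Sum>l<m. int (k l)) - int r * int n * int m"
      by (simp add: sum_subtractf sum_distrib_left algebra_simps)
    also have "\<dots> = int (r + s) * int (T m) - int r * int n * int m"
      unfolding T_def by simp
    finally show ?thesis .
  qed
  have Tm: "T m \<le> n * m"
  proof -
    have "T m \<le> (\<Sum>l<m. n)" unfolding T_def by (rule sum_mono) (use kn in auto)
    then show ?thesis by (simp add: mult.commute)
  qed
  have qv: "q = (real (r + s) * real (T m) - real r * real n * real m) / real n"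
    unfolding q_def total by simp
  have bounds: "lam q r s m \<le> real_of_int (\<Sum>v \<in> set (P i). f v) \<and>
            real_of_int (\<Sum>v \<in> set (P i). f v) \<le> Lam q r s m" if "i < n" for i
  proof -
    have e: "real_of_int (\<Sum>v \<in> set (P i). f v) = real (r + s) * real (cc n (T m) i) - real r * real m"
      unfolding sumP[OF that] ind[OF that] by simp
    show ?thesis unfolding e
      using lam_Lam_bound[OF assms(1,2,4) Tm qv] by blast
  qed
  show ?thesis
    by (rule exI[of _ P]) (use path disj cover bounds in blast)
qed

end
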